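(* Let $P$ be a finite poset and $R$ a restriction function on $P$. Then for every $p\in P$ and every $k\in R(p)$ there exists $f\in\mathrm{Inc}^R(P)$ with $f(p)=k$ if and only if $R$ is consistent.
   Context: A restriction function assigns to each $p\in P$ a nonempty finite set $R(p)\subseteq\mathbb{Z}$. $\mathrm{Inc}^R(P)$ is the set of $f:P\to\mathbb{Z}$ with $f(p)\in R(p)$ for all $p$ and $p_1<p_2\Rightarrow f(p_1)<f(p_2)$. $R$ is consistent if for every cover relation $x\lessdot y$ in $P$, $\min R(x)<\min R(y)$ and $\max R(x)<\max R(y)$. *)

theory Defs
  imports Main
begin

definition restriction_fn :: "'a set \<Rightarrow> ('a \<Rightarrow> int set) \<Rightarrow> bool" where
  "restriction_fn P R \<longleftrightarrow> (\<forall>p\<in>P. R p \<noteq> {} \<and> finite (R p))"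

definition Inc_R :: "'a::order set \<Rightarrow> ('a \<Rightarrow> int set) \<Rightarrow> ('a \<Rightarrow> int) set" where
  "Inc_R P R = {f. (\<forall>p\<in>P. f p \<in> R p) \<and> (\<forall>p1\<in>P. \<forall>p2\<in>P. p1 < p2 \<longrightarrow> f p1 < f p2)}"

definition covers :: "'a::order set \<Rightarrow> 'a \<Rightarrow> 'a \<Rightarrow> bool" where
  "covers P x y \<longleftrightarrow> x \<in> P \<and> y \<in> P \<and> x < y \<and> \<not> (\<exists>z\<in>P. x < z \<and> z < y)"

definition consistent :: "'a::order set \<Rightarrow> ('a \<Rightarrow> int set) \<Rightarrow> bool" where
  "consistent P R \<longleftrightarrow> (\<forall>x y. covers P x y \<longrightarrow> Min (R x) < Min (R y) \<and> Max (R x) < Max (R y))"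

end

theory Submission
  imports Defs
begin

lemma covers_mono_aux:
  fixes P :: "'a::order set" and g :: "'a \<Rightarrow> int"
  assumes fin: "finite P" and cov: "\<And>x y. covers P x y \<Longrightarrow> g x < g y"
  shows "card {z\<in>P. x < z \<and> z < y} = n \<Longrightarrow> x \<in> P \<Longrightarrow> y \<in> P \<Longrightarrow> x < y \<Longrightarrow> g x < g y"
proof (induction n arbitrary: x y rule: less_induct)
  case (less n)
  show ?case
  proof (cases "\<exists>z\<in>P. x < z \<and> z < y")
    case False
    then show ?thesis using less.prems cov unfolding covers_def by blast
  next
    case True
    then obtain z where z: "z \<in> P" "x < z" "z < y" by blast
    have f: "finite {z\<in>P. x < z \<and> z < y}" using fin by simp
    have s1: "{w\<in>P. x < w \<and> w < z} \<subset> {w\<in>P. x < w \<and> w < y}"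
      using z less_trans by auto
    have s2: "{w\<in>P. z < w \<and> w < y} \<subset> {w\<in>P. x < w \<and> w < y}"
      using z less_trans by auto
    have "card {w\<in>P. x < w \<and> w < z} < n" using psubset_card_mono[OF f s1] less.prems by simp
    then have a: "g x < g z" using less.IH z less.prems by blast
    have "card {w\<in>P. z < w \<and> w < y} < n" using psubset_card_mono[OF f s2] less.prems by simp
    then have b: "g z < g y" using less.IH z less.prems by blast
    show ?thesis using a b by simp
  qed
qed

lemma covers_mono:
  fixes P :: "'a::order set" and g :: "'a \<Rightarrow> int"
  assumes fin: "finite P" and cov: "\<And>x y. covers P x y \<Longrightarrow> g x < g y"
    and "x \<in> P" "y \<in> P" "x < y"
  shows "g x < g y"
  using covers_mono_aux[of P g, OF fin cov] assms by blast

theorem proposition2p2: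
  fixes P :: "'a::order set" and R :: "'a \<Rightarrow> int set"
  assumes "finite P" and "restriction_fn P R"
  shows "(\<forall>p\<in>P. \<forall>k\<in>R p. \<exists>f\<in>Inc_R P R. f p = k) \<longleftrightarrow> consistent P R"
proof
  have ne: "\<And>p. p \<in> P \<Longrightarrow> R p \<noteq> {} \<and> finite (R p)" using assms(2) unfolding restriction_fn_def by blast
  assume H: "\<forall>p\<in>P. \<forall>k\<in>R p. \<exists>f\<in>Inc_R P R. f p = k"
  show "consistent P R" unfolding consistent_def
  proof (intro allI impI conjI)
    fix x y assume c: "covers P x y"
    then have xy: "x \<in> P" "y \<in> P" "x < y" unfolding covers_def by auto
    obtain f where f: "f \<in> Inc_R P R" "f y = Min (R y)" using H xy ne[of y] Min_in by blast
    have "Min (R x) \<le> f x" using f xy ne[of x] unfolding Inc_R_def by auto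
    moreover have "f x < f y" using f(1) xy unfolding Inc_R_def by blast
    ultimately show "Min (R x) < Min (R y)" using f by simp
    obtain h where h: "h \<in> Inc_R P R" "h x = Max (R x)" using H xy ne[of x] Max_in by blast
    have "h y \<le> Max (R y)" using h xy ne[of y] unfolding Inc_R_def by auto
    moreover have "h x < h y" using h(1) xy unfolding Inc_R_def by blast
    ultimately show "Max (R x) < Max (R y)" using h by simp
  qed
next
  have ne: "\<And>p. p \<in> P \<Longrightarrow> R p \<noteq> {} \<and> finite (R p)" using assms(2) unfolding restriction_fn_def by blast
  assume C: "consistent P R"
  have mn: "\<And>x y. x \<in> P \<Longrightarrow> y \<in> P \<Longrightarrow> x < y \<Longrightarrow> Min (R x) < Min (R y)"
    using covers_mono[OF assms(1), of "\<lambda>q. Min (R q)"] C unfolding consistent_def by blast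
  have mx: "\<And>x y. x \<in> P \<Longrightarrow> y \<in> P \<Longrightarrow> x < y \<Longrightarrow> Max (R x) < Max (R y)"
    using covers_mono[OF assms(1), of "\<lambda>q. Max (R q)"] C unfolding consistent_def by blast
  have le: "\<And>q. q \<in> P \<Longrightarrow> Min (R q) \<le> Max (R q)"
    using ne by (meson Max_ge Min_in)
  show "\<forall>p\<in>P. \<forall>k\<in>R p. \<exists>f\<in>Inc_R P R. f p = k"
  proof (intro ballI)
    fix p k assume p: "p \<in> P" and k: "k \<in> R p"
    define f where "f q = (if q = p then k else if p < q then Max (R q) else Min (R q))" for q
    have kb: "Min (R p) \<le> k" "k \<le> Max (R p)" using ne[OF p] k by auto
    have "f \<in> Inc_R P R" unfolding Inc_R_def
    proof (intro CollectI conjI ballI impI)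
      fix q assume "q \<in> P" then show "f q \<in> R q" using k ne unfolding f_def by (auto intro: Min_in Max_in)
    next
      fix q1 q2 assume q: "q1 \<in> P" "q2 \<in> P" "q1 < q2"
      show "f q1 < f q2"
      proof (cases "q1 = p")
        case True
        then show ?thesis using q kb mx[OF p q(2)] unfolding f_def by auto
      next
        case n1: False
        show ?thesis
        proof (cases "p < q1")
          case True
          then have "p < q2" using q by auto
          then show ?thesis using True n1 q mx unfolding f_def by auto
        next
          case F: False
          show ?thesis
          proof (cases "q2 = p")
            case True then show ?thesis using n1 F q kb mn[OF q(1) p] unfolding f_def by auto
          next
            case n2: False
            show ?thesis
            proof (cases "p < q2")
              case True then show ?thesis using n1 n2 F q mn[OF q(1) q(2) q(3)] le[OF q(2)] unfolding f_def by auto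
            next
              case False then show ?thesis using n1 n2 F q mn unfolding f_def by auto
            qed
          qed
        qed
      qed
    qed
    moreover have "f p = k" unfolding f_def by simp
    ultimately show "\<exists>f\<in>Inc_R P R. f p = k" by blast
  qed
qed

end
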